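(* Let $m\ge d\ge1$, $\lambda=d/m$, $p$ a polynomial of degree $d$ with nonnegative real roots and largest root $R$, and define on $\{(x,y):x,y>\sqrt R\}$ \[ F(x,y)=-\frac1{\sqrt{md}}\log\big[y^{m-d}p(xy)\big]. \] Then $F$ is convex, and for every $z>\sqrt R$, $\partial_xF(z,z)\,\partial_yF(z,z)=\mathcal H(z)$, where $\mathcal H(z)=\mathcal G(z)\big(\lambda\mathcal G(z)+\frac{1-\lambda}{z}\big)$ and $\mathcal G(z)=\frac1d\frac{zp'(z^2)}{p(z^2)}$.
   Context: $p(xy)>0$ when $x,y>\sqrt R$ (for $p$ with positive leading coefficient), so $F$ is well defined there. *)

theory Defs
  imports "HOL-Analysis.Analysis" "HOL-Computational_Algebra.Polynomial"
begin

definition nonneg_real_rooted :: "real poly \<Rightarrow> bool" where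
  "nonneg_real_rooted p \<longleftrightarrow>
     (\<forall>z::complex. poly (map_poly complex_of_real p) z = 0 \<longrightarrow> z \<in> \<real> \<and> Re z \<ge> 0)"

definition largest_root :: "real poly \<Rightarrow> real" where
  "largest_root p = Max {x. poly p x = 0}"

definition Ffun :: "nat \<Rightarrow> nat \<Rightarrow> real poly \<Rightarrow> real \<Rightarrow> real \<Rightarrow> real" where
  "Ffun m d p x y = - (1 / sqrt (real m * real d)) * ln (y ^ (m - d) * poly p (x * y))"

definition Gfun :: "nat \<Rightarrow> real poly \<Rightarrow> real \<Rightarrow> real" where
  "Gfun d p z = (1 / real d) * (z * poly (pderiv p) (z\<^sup>2) / poly p (z\<^sup>2))"

definition Hfun :: "nat \<Rightarrow> nat \<Rightarrow> real poly \<Rightarrow> real \<Rightarrow> real" where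
  "Hfun m d p z = (let lam = real d / real m in
      Gfun d p z * (lam * Gfun d p z + (1 - lam) / z))"

end

theory Submission
  imports Defs "HOL-Computational_Algebra.Fundamental_Theorem_Algebra"
begin


lemma factor_real:
  fixes p :: "real poly"
  assumes "nonneg_real_rooted p"
  obtains r where "\<And>i. i < degree p \<Longrightarrow> r i \<ge> 0"
    "\<And>t. poly p t = lead_coeff p * (\<Prod>i<degree p. (t - r i))"
proof -
  define q where "q = map_poly complex_of_real p"
  obtain rt where rt: "smult (lead_coeff q) (\<Prod>i<degree q. [:-rt i, 1:]) = q"
    using complex_poly_decompose' by blast
  have dq: "degree q = degree p" unfolding q_def by (simp add: degree_map_poly coeff_map_poly)
  have lq: "lead_coeff q = complex_of_real (lead_coeff p)" unfolding q_def
    by (simp add: degree_map_poly coeff_map_poly)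
  have pq: "poly q z = of_real (lead_coeff p) * (\<Prod>i<degree p. (z - rt i))" for z
    using arg_cong[OF rt, of "\<lambda>q. poly q z"] dq lq by (simp add: poly_prod)
  have root: "rt i \<in> \<real> \<and> Re (rt i) \<ge> 0" if "i < degree p" for i
  proof -
    have "poly q (rt i) = 0" using pq[of "rt i"] that by (auto intro!: prod_zero)
    thus ?thesis using assms unfolding nonneg_real_rooted_def q_def by blast
  qed
  show ?thesis
  proof (rule that[of "\<lambda>i. Re (rt i)"])
    show "\<And>i. i < degree p \<Longrightarrow> Re (rt i) \<ge> 0" using root by blast
    fix t
    have "complex_of_real (poly p t) = poly q (of_real t)" unfolding q_def by (induction p) (auto simp: map_poly_pCons)
    also have "\<dots> = of_real (lead_coeff p) * (\<Prod>i<degree p. (of_real t - of_real (Re (rt i))))"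
      unfolding pq using root by (intro arg_cong2[where f="(*)"] prod.cong refl)
        (auto elim!: Reals_cases)
    also have "\<dots> = complex_of_real (lead_coeff p * (\<Prod>i<degree p. (t - Re (rt i))))"
      by simp
    finally show "poly p t = lead_coeff p * (\<Prod>i<degree p. (t - Re (rt i)))"
      using of_real_eq_iff by blast
  qed
qed



lemma neg_ln_concave:
  fixes g :: "'a::real_vector \<Rightarrow> real"
  assumes "concave_on S g" "\<And>z. z \<in> S \<Longrightarrow> g z > 0"
  shows "convex_on S (\<lambda>z. - ln (g z))"
  unfolding convex_on_def
proof (intro conjI ballI allI impI)
  show "convex S" using assms(1) concave_on_imp_convex by blast
  fix x y and u v :: real
  assume xy: "x \<in> S" "y \<in> S" and uv: "0 \<le> u" "0 \<le> v" "u + v = 1"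
  have ge: "g (u *\<^sub>R x + v *\<^sub>R y) \<ge> u * g x + v * g y"
    using assms(1) xy uv unfolding concave_on_iff by blast
  have gx: "g x > 0" "g y > 0" using assms(2) xy by auto
  have pos: "u * g x + v * g y > 0"
  proof (cases "u = 0")
    case True then show ?thesis using uv gx by simp
  next
    case False then have "u > 0" using uv by simp
    then show ?thesis using uv gx by (simp add: add_pos_nonneg)
  qed
  have "u * ln (g x) + v * ln (g y) \<le> ln (u * g x + v * g y)"
    using ln_concave gx uv unfolding concave_on_iff by (auto simp: Ball_def)
  also have "\<dots> \<le> ln (g (u *\<^sub>R x + v *\<^sub>R y))"
    using ge pos by simp
  finally show "- ln (g (u *\<^sub>R x + v *\<^sub>R y)) \<le> u * - ln (g x) + v * - ln (g y)" by simp
qed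

lemma concave_snd: "convex S \<Longrightarrow> concave_on S (\<lambda>(x::real, y::real). y)"
  unfolding concave_on_iff by auto

lemma concave_fst: "convex S \<Longrightarrow> concave_on S (\<lambda>(x::real, y::real). x)"
  unfolding concave_on_iff by auto

lemma concave_hyp:
  assumes "convex S" "S \<subseteq> {0<..} \<times> UNIV" "(r::real) \<ge> 0"
  shows "concave_on S (\<lambda>(x::real, y::real). y - r / x)"
  unfolding concave_on_iff
proof (intro conjI ballI allI impI)
  show "convex S" by fact
  fix a b and u v :: real
  assume ab: "a \<in> S" "b \<in> S" and uv: "0 \<le> u" "0 \<le> v" "u + v = 1"
  obtain x0 y0 x1 y1 where a: "a = (x0, y0)" and b: "b = (x1, y1)" by fastforce
  have x: "x0 > 0" "x1 > 0" using ab assms(2) a b by auto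
  have ci: "convex_on {0<..} (inverse :: real \<Rightarrow> real)"
    by (rule convex_on_inverse) auto
  have "inverse (u * x0 + v * x1) \<le> u * inverse x0 + v * inverse x1"
    proof -
      have "u = 1 - v" using uv by simp
      show ?thesis using convex_onD[OF ci, of v x0 x1] uv x by (simp add: \<open>u = 1 - v\<close>)
    qed
  then have "r * inverse (u * x0 + v * x1) \<le> r * (u * inverse x0 + v * inverse x1)"
    using assms(3) by (rule mult_left_mono)
  then have "r / (u * x0 + v * x1) \<le> u * (r / x0) + v * (r / x1)"
    by (simp add: divide_inverse algebra_simps)
  then show "u * (case a of (x, y) \<Rightarrow> y - r / x) + v * (case b of (x, y) \<Rightarrow> y - r / x)
         \<le> (case u *\<^sub>R a + v *\<^sub>R b of (x, y) \<Rightarrow> y - r / x)"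
    using a b by (simp add: algebra_simps)
qed


lemma convex_on_cong':
  assumes "convex_on S f" "\<And>x. x \<in> S \<Longrightarrow> f x = g x"
  shows "convex_on S g"
proof -
  have cS: "convex S" using assms(1) convex_on_imp_convex by blast
  show ?thesis using assms(1) unfolding convex_on_def
    using assms(2) convexD[OF cS] by (simp add: cS)
qed

lemma convex_on_sum_fun:
  assumes "finite I" "convex S" "\<And>i. i \<in> I \<Longrightarrow> convex_on S (f i)"
  shows "convex_on S (\<lambda>z. \<Sum>i\<in>I. f i z)"
  using assms by (induction I rule: finite_induct) (auto simp: convex_on_const)

theorem mainTheorem17:
  fixes m d :: nat and p :: "real poly"
  assumes "1 \<le> d" and "d \<le> m"
    and "degree p = d"
    and "lead_coeff p > 0"
    and "nonneg_real_rooted p"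
  shows "convex_on ({sqrt (largest_root p)<..} \<times> {sqrt (largest_root p)<..})
           (\<lambda>(x, y). Ffun m d p x y)
       \<and> (\<forall>z > sqrt (largest_root p).
            \<exists>Dx Dy. ((\<lambda>x. Ffun m d p x z) has_real_derivative Dx) (at z)
                  \<and> ((\<lambda>y. Ffun m d p z y) has_real_derivative Dy) (at z)
                  \<and> Dx * Dy = Hfun m d p z)"
proof -
  obtain r where r0: "\<And>i. i < d \<Longrightarrow> r i \<ge> 0"
    and pf: "\<And>t. poly p t = lead_coeff p * (\<Prod>i<d. (t - r i))"
    using factor_real[OF assms(5)] assms(3) by metis
  define c where "c = lead_coeff p"
  have c: "c > 0" using assms(4) c_def by simp
  define R where "R = largest_root p"
  have Z: "{x. poly p x = 0} = r ` {..<d}"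
    using c by (auto simp: pf c_def[symmetric])
  have R: "R = Max (r ` {..<d})" unfolding R_def largest_root_def Z ..
  have rR: "r i \<le> R" if "i < d" for i unfolding R using that by simp
  have R0: "R \<ge> 0"
  proof -
    have "R \<in> r ` {..<d}" unfolding R using assms(1) by (intro Max_in) (auto simp: lessThan_empty_iff)
    then show ?thesis using r0 by auto
  qed
  define s where "s = sqrt R"
  have s0: "s \<ge> 0" and ss: "s * s = R" using R0 unfolding s_def by auto
  have xyR: "x * y > R" if "x > s" "y > s" for x y
    using mult_strict_mono[OF that] that s0 ss by force
  have ppos: "poly p t > 0" if "t > R" for t
    unfolding pf using c rR that by (auto simp: c_def[symmetric] intro!: prod_pos mult_pos_pos dest!: rR)
  define K where "K = 1 / sqrt (real m * real d)"
  have K0: "K \<ge> 0" unfolding K_def by simp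
  define S where "S = {s<..} \<times> {s<..}"
  have cS: "convex S" unfolding S_def by (intro convex_Times) auto
  have Spos: "S \<subseteq> {0<..} \<times> UNIV" unfolding S_def using s0 by auto
  define G where "G = (\<lambda>(x::real, y::real). K * (real (m - d) * (- ln y) + (- ln c)
      + (\<Sum>i<d. (- ln x) + (- ln (y - r i / x)))))"
  have conv: "convex_on S G"
  proof -
    have "convex_on S (\<lambda>(x::real, y::real). - ln y)"
    proof -
      have "convex_on S (\<lambda>z. - ln ((\<lambda>(x::real, y::real). y) z))"
        by (rule neg_ln_concave[OF concave_snd[OF cS]]) (use s0 in \<open>auto simp: S_def\<close>)
      then show ?thesis by (simp add: case_prod_unfold)
    qed
    then have a: "convex_on S (\<lambda>z. real (m - d) * (case z of (x::real, y::real) \<Rightarrow> - ln y))"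
      by (intro convex_on_cmul) auto
    have b: "convex_on S (\<lambda>(x::real, y::real). - ln x)"
    proof -
      have "convex_on S (\<lambda>z. - ln ((\<lambda>(x::real, y::real). x) z))"
        by (rule neg_ln_concave[OF concave_fst[OF cS]]) (use Spos in auto)
      then show ?thesis by (simp add: case_prod_unfold)
    qed
    have h: "convex_on S (\<lambda>(x::real, y::real). - ln (y - r i / x))" if "i < d" for i
    proof -
      have "(case z of (x, y) \<Rightarrow> y - r i / x) > 0" if "z \<in> S" for z
      proof -
        obtain x y where z: "z = (x, y)" by fastforce
        have "x > s" "y > s" using that z unfolding S_def by auto
        then have "x * y > r i" "x > 0" using xyR rR \<open>i < d\<close> s0 by force+
        then show ?thesis using z by (simp add: field_simps)
      qed
      then show ?thesis using neg_ln_concave[OF concave_hyp[OF cS Spos r0[OF that]]]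
        by (simp add: case_prod_unfold)
    qed
    have "convex_on S (\<lambda>z. \<Sum>i<d. (case z of (x::real, y::real) \<Rightarrow> - ln x)
           + (case z of (x::real, y::real) \<Rightarrow> - ln (y - r i / x)))"
      using b h cS by (intro convex_on_sum_fun convex_on_add) auto
    then have "convex_on S (\<lambda>z. (real (m - d) * (case z of (x::real, y::real) \<Rightarrow> - ln y)
        + (- ln c)) + (\<Sum>i<d. (case z of (x::real, y::real) \<Rightarrow> - ln x)
           + (case z of (x::real, y::real) \<Rightarrow> - ln (y - r i / x))))"
      using a cS by (intro convex_on_add) (auto simp: convex_on_const)
    then have "convex_on S (\<lambda>z. K * ((real (m - d) * (case z of (x::real, y::real) \<Rightarrow> - ln y)
        + (- ln c)) + (\<Sum>i<d. (case z of (x::real, y::real) \<Rightarrow> - ln x)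
           + (case z of (x::real, y::real) \<Rightarrow> - ln (y - r i / x)))))"
      using K0 by (intro convex_on_cmul) auto
    then show ?thesis unfolding G_def by (simp add: case_prod_unfold)
  qed
  have eq: "G z = (\<lambda>(x, y). Ffun m d p x y) z" if "z \<in> S" for z
  proof -
    obtain x y where z: "z = (x, y)" by fastforce
    have xy: "x > s" "y > s" using that z unfolding S_def by auto
    then have x0: "x > 0" "y > 0" using s0 by linarith+
    have fac: "x * y - r i > 0" if "i < d" for i using xyR[OF xy] rR[OF that] by linarith
    have lp: "ln (\<Prod>i<d. x * y - r i) = (\<Sum>i<d. ln (x * y - r i))"
    proof (rule ln_prod)
      fix i assume "i \<in> {..<d}"
      then show "x * y - r i \<noteq> 0" using fac[of i] by simp
    qed simp
    have "ln (y ^ (m - d) * poly p (x * y)) = real (m - d) * ln y + ln c + (\<Sum>i<d. ln (x * y - r i))"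
      unfolding pf c_def[symmetric] using x0 c fac lp
      by (simp add: ln_mult ln_realpow prod_pos ln_prod[where I="{..<d}"] less_imp_neq[symmetric])
    also have "(\<Sum>i<d. ln (x * y - r i)) = (\<Sum>i<d. ln x + ln (y - r i / x))"
    proof (intro sum.cong refl)
      fix i assume "i \<in> {..<d}"
      then have "x * y - r i > 0" using fac by simp
      then have "y - r i / x > 0" using x0 by (simp add: field_simps)
      moreover have "x * y - r i = x * (y - r i / x)" using x0 by (simp add: field_simps)
      ultimately show "ln (x * y - r i) = ln x + ln (y - r i / x)" using x0 by (simp add: ln_mult)
    qed
    finally have L: "ln (y ^ (m - d) * poly p (x * y)) = real (m - d) * ln y + ln c
        + (\<Sum>i<d. ln x + ln (y - r i / x))" .
    have sn: "(\<Sum>i<d. (- ln x) + (- ln (y - r i / x))) = - (\<Sum>i<d. ln x + ln (y - r i / x))"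
      by (simp add: sum_negf[symmetric])
    show ?thesis unfolding z G_def Ffun_def K_def
      by (simp only: case_prod_conv sn L) (simp add: algebra_simps)
  qed
  have part1: "convex_on S (\<lambda>(x, y). Ffun m d p x y)"
    by (rule convex_on_cong'[OF conv eq])
  have part2: "\<exists>Dx Dy. ((\<lambda>x. Ffun m d p x z) has_real_derivative Dx) (at z)
                  \<and> ((\<lambda>y. Ffun m d p z y) has_real_derivative Dy) (at z)
                  \<and> Dx * Dy = Hfun m d p z" if z: "z > s" for z
  proof -
    have z0: "z > 0" using z s0 by linarith
    define P where "P = poly p (z * z)"
    define P' where "P' = poly (pderiv p) (z * z)"
    have P0: "P > 0" unfolding P_def using xyR[OF z z] ppos by simp
    define Dx where "Dx = - K * (z * P' / P)"
    define Dy where "Dy = - K * (real (m - d) / z + z * P' / P)"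
    have zpow: "z ^ (m - d) > 0" using z0 by simp
    have dx: "((\<lambda>x. Ffun m d p x z) has_real_derivative Dx) (at z)"
      unfolding Ffun_def K_def[symmetric] Dx_def
      using zpow P0 z0
      by (auto intro!: derivative_eq_intros simp: P_def P'_def field_simps)
    have pw: "real (m - d) * z ^ (m - d - 1) = real (m - d) * z ^ (m - d) / z"
    proof (cases "m - d = 0")
      case False
      then have "z ^ (m - d) = z * z ^ (m - d - 1)" by (metis power_eq_if)
      then show ?thesis using z0 by simp
    qed simp
    have pw2: "z ^ (m - d) = z * z ^ (m - Suc d)" if "d < m"
      using that by (metis Suc_diff_Suc power_Suc)
    have dy: "((\<lambda>y. Ffun m d p z y) has_real_derivative Dy) (at z)"
      unfolding Ffun_def K_def[symmetric] Dy_def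
      using zpow P0 z0
      by (auto intro!: derivative_eq_intros simp: P_def P'_def field_simps pw pw2) (meson not_le pw2)
    have K2: "K * K = 1 / (real m * real d)" unfolding K_def
      using assms(1,2) by (simp add: real_sqrt_mult power2_eq_square flip: real_sqrt_mult)
    have md: "real (m - d) = real m - real d" using assms(2) by simp
    have "Dx * Dy = (K * K) * ((z * P' / P) * ((real m - real d) / z + z * P' / P))"
      unfolding Dx_def Dy_def md by (simp add: algebra_simps diff_divide_distrib)
    also have "\<dots> = (z * P' / P) * ((real m - real d) / z + z * P' / P) / (real m * real d)"
      unfolding K2 by simp
    also have "\<dots> = Hfun m d p z"
      unfolding Hfun_def Gfun_def Let_def power2_eq_square P_def[symmetric] P'_def[symmetric]
      using z0 P0 assms(1,2) by (simp add: field_simps)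
    finally have "Dx * Dy = Hfun m d p z" .
    then show ?thesis using dx dy by blast
  qed
  show ?thesis using part1 part2 unfolding S_def s_def R_def by blast
qed

end
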